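(* Let $t\in[0,1]$, $\ell\in\{1,\dots,L\}$, and $\mathbf x_t\in\mathsf X$ with $p_t(\mathbf x_t)>0$. Then for every $\mathbf y\in\mathsf X$ with $\mathbf y^{-\ell}=\mathbf x_t^{-\ell}$, $$\frac{p_t(\mathbf y)}{p_t(\mathbf x_t)}=\frac{q^\ell_{t|0}\big(\mathbf y^\ell\mid\hat{\mathbf x}^{\mathrm{loo}}_0(\mathbf x_t,t)^\ell\big)}{q^\ell_{t|0}\big(\mathbf x_t^\ell\mid\hat{\mathbf x}^{\mathrm{loo}}_0(\mathbf x_t,t)^\ell\big)}.$$
   Context: **Setup.** - Let $K\ge2$, $L\ge1$ and $\mathsf V=\{1,\dots,K\}$. Tokens are identified with the standard basis vectors of $\mathbb R^K$. - $\Delta_K$ is the probability simplex. - $\mathsf X=\mathsf V^L$. For $\mathbf x\in\mathsf X$, $\mathbf x^\ell$ is its $\ell$-th token and $\mathbf x^{-\ell}$ denotes the other tokens. - $p_0$ is a distribution on $\mathsf X$. - The noise schedule $\alpha:[0,1]\to[0,1]$ is nonincreasing with $\alpha_0=1$. - For each $\ell$ fix $\pi^\ell\in\Delta_K$. The forward token kernel is $q^\ell_{t|0}(x\mid\nu)=\langle x,\alpha_t\nu+(1-\alpha_t)\pi^\ell\rangle$, defined for $\nu\in\Delta_K$ (in particular for one-hot $\nu$). - The sequence-level kernel is the product over positions. - $X_0\sim p_0$ and $X_t\mid X_0\sim q_{t|0}(\cdot\mid X_0)$. $p_t$ is the law of $X_t$. **Leave-one-out mean.** - $\hat{\mathbf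 x}^{\mathrm{loo}}_0(\mathbf x_t,t)^\ell:=\mathbb E[X_0^\ell\mid X_t^{-\ell}=\mathbf x_t^{-\ell}]\in\Delta_K$. *)

theory Defs
  imports Complex_Main "HOL-Library.FuncSet"
begin

text \<open>Tokens are 1..K; a token x is identified with the basis vector e_x, so
  the pairing of x with nu is nu x. Sequences are extensional functions on
  positions 1..L with values in 1..K.\<close>

definition seqs :: "nat \<Rightarrow> nat \<Rightarrow> (nat \<Rightarrow> nat) set" where
  "seqs K L = PiE {1..L} (\<lambda>_. {1..K})"

definition onehot :: "nat \<Rightarrow> nat \<Rightarrow> real" where
  "onehot k = (\<lambda>j. if j = k then 1 else 0)"

definition q_tok :: "(real \<Rightarrow> real) \<Rightarrow> (nat \<Rightarrow> nat \<Rightarrow> real) \<Rightarrow> real \<Rightarrow> nat \<Rightarrow> nat \<Rightarrow> (nat \<Rightarrow> real) \<Rightarrow> real" where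
  "q_tok \<alpha> \<pi> t l x \<nu> = \<alpha> t * \<nu> x + (1 - \<alpha> t) * \<pi> l x"

definition q_seq :: "nat \<Rightarrow> (real \<Rightarrow> real) \<Rightarrow> (nat \<Rightarrow> nat \<Rightarrow> real) \<Rightarrow> real \<Rightarrow> (nat \<Rightarrow> nat) \<Rightarrow> (nat \<Rightarrow> nat) \<Rightarrow> real" where
  "q_seq L \<alpha> \<pi> t x0 x = (\<Prod>l\<in>{1..L}. q_tok \<alpha> \<pi> t l (x l) (onehot (x0 l)))"

definition p_t :: "nat \<Rightarrow> nat \<Rightarrow> ((nat \<Rightarrow> nat) \<Rightarrow> real) \<Rightarrow> (real \<Rightarrow> real) \<Rightarrow> (nat \<Rightarrow> nat \<Rightarrow> real) \<Rightarrow> real \<Rightarrow> (nat \<Rightarrow> nat) \<Rightarrow> real" where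
  "p_t K L p0 \<alpha> \<pi> t x = (\<Sum>x0\<in>seqs K L. p0 x0 * q_seq L \<alpha> \<pi> t x0 x)"

text \<open>Leave-one-out mean: E[X_0^l | X_t^{-l} = x^{-l}], computed from the joint law
  P(X_0 = x0, X_t = y) = p0 x0 * q_seq x0 y, as a vector indexed by tokens.\<close>
definition loo :: "nat \<Rightarrow> nat \<Rightarrow> ((nat \<Rightarrow> nat) \<Rightarrow> real) \<Rightarrow> (real \<Rightarrow> real) \<Rightarrow> (nat \<Rightarrow> nat \<Rightarrow> real) \<Rightarrow> real \<Rightarrow> (nat \<Rightarrow> nat) \<Rightarrow> nat \<Rightarrow> nat \<Rightarrow> real" where
  "loo K L p0 \<alpha> \<pi> t x l =
     (\<lambda>k. (\<Sum>x0\<in>seqs K L. \<Sum>y\<in>{y\<in>seqs K L. \<forall>j\<in>{1..L}-{l}. y j = x j}.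
              p0 x0 * q_seq L \<alpha> \<pi> t x0 y * onehot (x0 l) k)
          / (\<Sum>x0\<in>seqs K L. \<Sum>y\<in>{y\<in>seqs K L. \<forall>j\<in>{1..L}-{l}. y j = x j}.
              p0 x0 * q_seq L \<alpha> \<pi> t x0 y))"

end

theory Submission
  imports Defs
begin

lemma finite_seqs: "finite (seqs K L)"
  unfolding seqs_def by (intro finite_PiE) auto

theorem mainTheorem3:
  fixes K L :: nat and p0 :: "(nat \<Rightarrow> nat) \<Rightarrow> real" and \<alpha> :: "real \<Rightarrow> real"
    and \<pi> :: "nat \<Rightarrow> nat \<Rightarrow> real" and t :: real and l :: nat and x y :: "nat \<Rightarrow> nat"
  assumes K2: "K \<ge> 2" and L1: "L \<ge> 1"
    and p0_nonneg: "\<forall>z\<in>seqs K L. p0 z \<ge> 0"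
    and p0_sum: "(\<Sum>z\<in>seqs K L. p0 z) = 1"
    and \<alpha>_range: "\<forall>s\<in>{0..1}. 0 \<le> \<alpha> s \<and> \<alpha> s \<le> 1"
    and \<alpha>_mono: "\<forall>s\<in>{0..1}. \<forall>s'\<in>{0..1}. s \<le> s' \<longrightarrow> \<alpha> s' \<le> \<alpha> s"
    and \<alpha>0: "\<alpha> 0 = 1"
    and \<pi>_nonneg: "\<forall>j\<in>{1..L}. \<forall>k\<in>{1..K}. \<pi> j k \<ge> 0"
    and \<pi>_sum: "\<forall>j\<in>{1..L}. (\<Sum>k\<in>{1..K}. \<pi> j k) = 1"
    and t: "t \<in> {0..1}"
    and l: "l \<in> {1..L}"
    and x: "x \<in> seqs K L"
    and px: "p_t K L p0 \<alpha> \<pi> t x > 0"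
    and y: "y \<in> seqs K L"
    and yx: "\<forall>j\<in>{1..L}-{l}. y j = x j"
  shows "p_t K L p0 \<alpha> \<pi> t y / p_t K L p0 \<alpha> \<pi> t x
       = q_tok \<alpha> \<pi> t l (y l) (loo K L p0 \<alpha> \<pi> t x l)
         / q_tok \<alpha> \<pi> t l (x l) (loo K L p0 \<alpha> \<pi> t x l)"
proof -
  define S where "S = seqs K L"
  define Y where "Y = {y\<in>seqs K L. \<forall>j\<in>{1..L}-{l}. y j = x j}"
  define R where "R x0 = (\<Prod>j\<in>{1..L}-{l}. q_tok \<alpha> \<pi> t j (x j) (onehot (x0 j)))" for x0
  define qq where "qq c z = q_tok \<alpha> \<pi> t l z (onehot c)" for c z
  define W where "W = (\<Sum>x0\<in>S. p0 x0 * R x0)"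
  define N where "N k = (\<Sum>x0\<in>S. p0 x0 * R x0 * onehot (x0 l) k)" for k
  have fS: "finite S" unfolding S_def by (rule finite_seqs)
  have a01: "0 \<le> \<alpha> t" "\<alpha> t \<le> 1" using \<alpha>_range t by auto
  have xK: "x j \<in> {1..K}" if "j \<in> {1..L}" "z \<in> S" for j z
    using x that unfolding seqs_def by auto
  have zK: "z j \<in> {1..K}" if "j \<in> {1..L}" "z \<in> S" for j z
    using that unfolding seqs_def S_def by auto
  have Rnn: "R x0 \<ge> 0" for x0
    unfolding R_def
  proof (intro prod_nonneg)
    fix j assume j: "j \<in> {1..L} - {l}"
    hence "x j \<in> {1..K}" using x unfolding seqs_def by auto
    hence "\<pi> j (x j) \<ge> 0" using \<pi>_nonneg j by auto
    moreover have "onehot (x0 j) (x j) \<ge> 0" unfolding onehot_def by auto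
    ultimately show "0 \<le> q_tok \<alpha> \<pi> t j (x j) (onehot (x0 j))"
      unfolding q_tok_def using a01 by auto
  qed
  have qsplit: "q_seq L \<alpha> \<pi> t x0 z = qq (x0 l) (z l) * R x0" if "z \<in> Y" for x0 z
  proof -
    have "q_seq L \<alpha> \<pi> t x0 z = q_tok \<alpha> \<pi> t l (z l) (onehot (x0 l)) *
        (\<Prod>j\<in>{1..L}-{l}. q_tok \<alpha> \<pi> t j (z j) (onehot (x0 j)))"
      unfolding q_seq_def using l by (simp add: prod.remove)
    also have "(\<Prod>j\<in>{1..L}-{l}. q_tok \<alpha> \<pi> t j (z j) (onehot (x0 j))) = R x0"
      unfolding R_def using that unfolding Y_def by (intro prod.cong) auto
    finally show ?thesis unfolding qq_def .
  qed
  have Yimg: "Y = (\<lambda>k. x(l:=k)) ` {1..K}"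
  proof
    show "Y \<subseteq> (\<lambda>k. x(l:=k)) ` {1..K}"
    proof
      fix z assume z: "z \<in> Y"
      have "z = x(l := z l)"
      proof
        fix j show "z j = (x(l := z l)) j"
          using z x l unfolding Y_def seqs_def
          by (cases "j = l"; cases "j \<in> {1..L}") (auto simp: PiE_def extensional_def)
      qed
      moreover have "z l \<in> {1..K}" using z l unfolding Y_def seqs_def by auto
      ultimately show "z \<in> (\<lambda>k. x(l:=k)) ` {1..K}" by blast
    qed
    show "(\<lambda>k. x(l:=k)) ` {1..K} \<subseteq> Y"
    proof
      fix z assume "z \<in> (\<lambda>k. x(l:=k)) ` {1..K}"
      then obtain k where k: "k \<in> {1..K}" and zk: "z = x(l:=k)" by blast
      have "z \<in> seqs K L" unfolding zk seqs_def
        proof -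
        have "x(l:=k) \<in> PiE (insert l {1..L}) (\<lambda>_. {1..K})"
          using x k unfolding seqs_def by (intro PiE_fun_upd)
        moreover have "insert l {1..L} = {1..L}" using l by blast
        ultimately show "x(l:=k) \<in> PiE {1..L} (\<lambda>_. {1..K})" by simp
      qed
      moreover have "\<forall>j\<in>{1..L}-{l}. z j = x j" unfolding zk by simp
      ultimately show "z \<in> Y" unfolding Y_def by simp
    qed
  qed
  have injY: "inj_on (\<lambda>k. x(l:=k)) {1..K}"
    by (rule inj_onI) (metis fun_upd_same)
  have sumY: "(\<Sum>z\<in>Y. f (z l)) = (\<Sum>k\<in>{1..K}. f k)" for f :: "nat \<Rightarrow> real"
    unfolding Yimg by (subst sum.reindex[OF injY]) auto
  have qqsum: "(\<Sum>k\<in>{1..K}. qq c k) = 1" if "c \<in> {1..K}" for c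
  proof -
    have "(\<Sum>k\<in>{1..K}. onehot c k) = 1"
      unfolding onehot_def using that by simp
    moreover have "(\<Sum>k\<in>{1..K}. \<pi> l k) = 1" using \<pi>_sum l by auto
    ultimately show ?thesis
      unfolding qq_def q_tok_def by (simp add: sum.distrib sum_distrib_left[symmetric])
  qed
  have D: "(\<Sum>x0\<in>S. \<Sum>z\<in>Y. p0 x0 * q_seq L \<alpha> \<pi> t x0 z) = W"
    unfolding W_def
  proof (rule sum.cong[OF refl])
    fix x0 assume x0: "x0 \<in> S"
    have "(\<Sum>z\<in>Y. p0 x0 * q_seq L \<alpha> \<pi> t x0 z) = (\<Sum>z\<in>Y. p0 x0 * R x0 * qq (x0 l) (z l))"
      by (intro sum.cong refl) (simp add: qsplit)
    also have "\<dots> = p0 x0 * R x0 * (\<Sum>k\<in>{1..K}. qq (x0 l) k)"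
      by (simp add: sum_distrib_left[symmetric] sumY)
    also have "\<dots> = p0 x0 * R x0" using qqsum zK[OF l x0] by simp
    finally show "(\<Sum>z\<in>Y. p0 x0 * q_seq L \<alpha> \<pi> t x0 z) = p0 x0 * R x0" .
  qed
  have Nk: "(\<Sum>x0\<in>S. \<Sum>z\<in>Y. p0 x0 * q_seq L \<alpha> \<pi> t x0 z * onehot (x0 l) k) = N k" for k
    unfolding N_def
  proof (rule sum.cong[OF refl])
    fix x0 assume x0: "x0 \<in> S"
    have "(\<Sum>z\<in>Y. p0 x0 * q_seq L \<alpha> \<pi> t x0 z * onehot (x0 l) k)
        = (\<Sum>z\<in>Y. p0 x0 * R x0 * onehot (x0 l) k * qq (x0 l) (z l))"
      by (intro sum.cong refl) (simp add: qsplit)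
    also have "\<dots> = p0 x0 * R x0 * onehot (x0 l) k * (\<Sum>k\<in>{1..K}. qq (x0 l) k)"
      by (simp add: sum_distrib_left[symmetric] sumY)
    also have "\<dots> = p0 x0 * R x0 * onehot (x0 l) k" using qqsum zK[OF l x0] by simp
    finally show "(\<Sum>z\<in>Y. p0 x0 * q_seq L \<alpha> \<pi> t x0 z * onehot (x0 l) k) = p0 x0 * R x0 * onehot (x0 l) k" .
  qed
  have loo_eq: "loo K L p0 \<alpha> \<pi> t x l = (\<lambda>k. N k / W)"
    unfolding loo_def using D Nk unfolding S_def Y_def by simp
  have pt: "p_t K L p0 \<alpha> \<pi> t z = \<alpha> t * N (z l) + (1 - \<alpha> t) * \<pi> l (z l) * W"
    if "z \<in> Y" for z
  proof -
    have "p_t K L p0 \<alpha> \<pi> t z = (\<Sum>x0\<in>S. p0 x0 * R x0 * qq (x0 l) (z l))"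
      unfolding p_t_def S_def using qsplit[OF that] by (intro sum.cong refl) simp
    also have "\<dots> = (\<Sum>x0\<in>S. \<alpha> t * (p0 x0 * R x0 * onehot (x0 l) (z l)) + (1 - \<alpha> t) * \<pi> l (z l) * (p0 x0 * R x0))"
      unfolding qq_def q_tok_def by (intro sum.cong refl) (simp add: algebra_simps)
    also have "\<dots> = \<alpha> t * N (z l) + (1 - \<alpha> t) * \<pi> l (z l) * W"
      unfolding N_def W_def by (simp add: sum.distrib sum_distrib_left)
    finally show ?thesis .
  qed
  have xY: "x \<in> Y" using x unfolding Y_def by auto
  have yY: "y \<in> Y" using y yx unfolding Y_def by auto
  have Wne: "W \<noteq> 0"
  proof
    assume W0: "W = 0"
    have nn: "\<forall>x0\<in>S. 0 \<le> p0 x0 * R x0" using p0_nonneg Rnn unfolding S_def by auto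
    hence z: "\<forall>x0\<in>S. p0 x0 * R x0 = 0" using W0 unfolding W_def
      using sum_nonneg_eq_0_iff[OF fS, of "\<lambda>x0. p0 x0 * R x0"] by simp
    have "p_t K L p0 \<alpha> \<pi> t x = (\<Sum>x0\<in>S. p0 x0 * R x0 * qq (x0 l) (x l))"
      unfolding p_t_def S_def using qsplit[OF xY] by (intro sum.cong refl) simp
    also have "\<dots> = 0" using z by (intro sum.neutral) auto
    finally show False using px by simp
  qed
  have qeq: "q_tok \<alpha> \<pi> t l (z l) (loo K L p0 \<alpha> \<pi> t x l) = p_t K L p0 \<alpha> \<pi> t z / W"
    if "z \<in> Y" for z
    unfolding loo_eq pt[OF that] q_tok_def using Wne by (simp add: field_simps)
  show ?thesis unfolding qeq[OF xY] qeq[OF yY] using Wne by simp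
qed

end
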